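(* $\mathrm{Sort}(\mathrm{SC}_{\underline{12}3})$ is not a permutation class.
   Context: $\mathfrak S_n$ is the set of permutations of $\{1,\dots,n\}$. A permutation $\pi$ contains a (classical) permutation $\tau$ if some subsequence of $\pi$ has the same relative order as $\tau$. A permutation class is a set $\Pi$ of permutations such that every permutation contained in some $\pi\in\Pi$ is also in $\Pi$. A vincular pattern is a permutation with some entries underlined; a sequence contains it if it has a subsequence with the same relative order in which entries corresponding to adjacent underlined entries occupy consecutive positions. An occurrence of $\underline{12}3$ is $a_j a_{j+1} a_l$ with $l>j+1$ and $a_j<a_{j+1}<a_l$. For a pattern $\sigma$, the map $\mathrm{SC}_\sigma$ acts on $\tau$: read entries left to right; when the next entry $x$ is read, if pushing $x$ yields a stack whose entries read top to bottom (stack adjacency = consecutive positions) avoid $\sigma$, push $x$; otherwise pop the top stack entry to the output and repeat. At the end pop all remaining entries; the output is $\mathrm{SC}_\sigma(\tau)$. West's stack-sorting map is $s=\mathrm{SC}_{21}$. $\mathrm{Sort}_n(\mathrm{SC}_\sigma)=\{\tau\in\mathfrak S_n : s(\mathrm{SC}_\sigma(\tau))=12\cdots n\}$ and $\mathrm{Sort}(\mathrm{SC}_\sigma)=\bigcup_{n\ge1}\mathrm{Sort}_n(\mathrm{SC}_\sigma)$. *)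

theory Defs
  imports Main
begin

definition perms :: "nat \<Rightarrow> nat list set" where
  "perms n = {xs. length xs = n \<and> distinct xs \<and> set xs = {1..n}}"

definition order_iso :: "nat list \<Rightarrow> nat list \<Rightarrow> bool" where
  "order_iso a p \<longleftrightarrow> length a = length p \<and>
     (\<forall>i < length p. \<forall>j < length p. (a ! i < a ! j \<longleftrightarrow> p ! i < p ! j))"

text \<open>A vincular pattern is a pair (p, U): the pattern p, and U the set of indices i
  (0-based) such that entries i and i+1 of p are underlined and adjacent, i.e. their
  occurrences must be at consecutive positions.\<close>
definition contains_vinc :: "nat list \<Rightarrow> nat list \<times> nat set \<Rightarrow> bool" where
  "contains_vinc w pat \<longleftrightarrow> (case pat of (p, U) \<Rightarrow>
     (\<exists>is. length is = length p \<and> sorted_wrt (<) is \<and> (\<forall>k\<in>set is. k < length w) \<and>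
          order_iso (map (\<lambda>k. w ! k) is) p \<and>
          (\<forall>i\<in>U. Suc i < length p \<longrightarrow> is ! Suc i = Suc (is ! i))))"

definition contains :: "nat list \<Rightarrow> nat list \<Rightarrow> bool" where
  "contains w p \<longleftrightarrow> contains_vinc w (p, {})"

text \<open>The stack is a list whose head is the top;
  it is thus read top to bottom.  If the stack is empty
  the entry is pushed (a one-entry stack avoids every pattern of length at least 2).\<close>
function sc_aux :: "(nat list \<Rightarrow> bool) \<Rightarrow> nat list \<Rightarrow> nat list \<Rightarrow> nat list" where
  "sc_aux P [] st = st"
| "sc_aux P (x # xs) st =
     (if st = [] \<or> P (x # st) then sc_aux P xs (x # st)
      else hd st # sc_aux P (x # xs) (tl st))"
  by pat_completeness auto
termination
  by (relation "measure (\<lambda>(P, xs, st). 2 * length xs + length st)") (auto simp: neq_Nil_conv)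

definition SC :: "nat list \<times> nat set \<Rightarrow> nat list \<Rightarrow> nat list" where
  "SC \<sigma> \<tau> = sc_aux (\<lambda>st. \<not> contains_vinc st \<sigma>) \<tau> []"

definition west_s :: "nat list \<Rightarrow> nat list" where
  "west_s = SC ([2, 1], {})"

definition Sort_n :: "nat list \<times> nat set \<Rightarrow> nat \<Rightarrow> nat list set" where
  "Sort_n \<sigma> n = {\<tau> \<in> perms n. west_s (SC \<sigma> \<tau>) = [1..<Suc n]}"

definition Sort :: "nat list \<times> nat set \<Rightarrow> nat list set" where
  "Sort \<sigma> = (\<Union>n\<in>{1..}. Sort_n \<sigma> n)"

definition perm_class :: "nat list set \<Rightarrow> bool" where
  "perm_class \<Pi> \<longleftrightarrow> \<Pi> \<subseteq> (\<Union>n\<in>{1..}. perms n) \<and>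
     (\<forall>\<pi>\<in>\<Pi>. \<forall>n\<ge>1. \<forall>\<tau>\<in>perms n. contains \<pi> \<tau> \<longrightarrow> \<tau> \<in> \<Pi>)"

definition pat_12_3 :: "nat list \<times> nat set" where
  "pat_12_3 = ([1, 2, 3], {0})"

end

theory Submission
  imports Defs
begin

lemma ex3: "length is = 3 \<Longrightarrow> \<exists>a b c. is = [a,b,c]"
  by (cases "is"; cases "tl is"; cases "tl (tl is)"; auto simp: numeral_eq_Suc)

lemma ex2: "length is = 2 \<Longrightarrow> \<exists>a b. is = [a,b]"
  by (cases "is"; cases "tl is"; auto simp: numeral_eq_Suc)

lemma c123:
  "contains_vinc w ([Suc 0,2,3],{0}) \<longleftrightarrow>
    (\<exists>l<length w. \<exists>j<l. Suc j < l \<and> w!j < w!Suc j \<and> w!Suc j < w!l)"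
proof
  assume "contains_vinc w ([Suc 0,2,3],{0})"
  then have "\<exists>is. length is = 3 \<and> sorted_wrt (<) is \<and> (\<forall>k\<in>set is. k < length w) \<and>
     order_iso (map (\<lambda>k. w ! k) is) [1,2,3] \<and> is ! 1 = Suc (is ! 0)"
    unfolding contains_vinc_def by (simp add: numeral_eq_Suc)
  then obtain "is" where h: "length is = 3" "sorted_wrt (<) is" "\<forall>k\<in>set is. k < length w"
     "order_iso (map (\<lambda>k. w ! k) is) [1,2,3]" "is ! 1 = Suc (is ! 0)"
    by blast
  from ex3[OF h(1)] obtain a b c where e: "is = [a,b,c]" by blast
  have o: "w!a < w!b" "w!b < w!c"
    using h(4) unfolding e order_iso_def
    by (auto simp: numeral_eq_Suc All_less_Suc)
  show "\<exists>l<length w. \<exists>j<l. Suc j < l \<and> w!j < w!Suc j \<and> w!Suc j < w!l"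
    using h o unfolding e by (intro exI[of _ c] conjI exI[of _ a]) auto
next
  assume "\<exists>l<length w. \<exists>j<l. Suc j < l \<and> w!j < w!Suc j \<and> w!Suc j < w!l"
  then obtain l j where h: "l < length w" "Suc j < l" "w!j < w!Suc j" "w!Suc j < w!l" by blast
  show "contains_vinc w ([Suc 0,2,3],{0})"
    unfolding contains_vinc_def
    apply (simp only: prod.case)
    apply (rule exI[of _ "[j, Suc j, l]"])
    using h by (auto simp: order_iso_def numeral_eq_Suc All_less_Suc)
qed

lemma c21:
  "contains_vinc w ([2,Suc 0],{}) \<longleftrightarrow> (\<exists>l<length w. \<exists>j<l. w!l < w!j)"
proof
  assume "contains_vinc w ([2,Suc 0],{})"
  then have "\<exists>is. length is = 2 \<and> sorted_wrt (<) is \<and> (\<forall>k\<in>set is. k < length w) \<and>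
     order_iso (map (\<lambda>k. w ! k) is) [2,1]"
    unfolding contains_vinc_def by (simp add: numeral_eq_Suc)
  then obtain "is" where h: "length is = 2" "sorted_wrt (<) is" "\<forall>k\<in>set is. k < length w"
     "order_iso (map (\<lambda>k. w ! k) is) [2,1]"
    by blast
  from ex2[OF h(1)] obtain a b where e: "is = [a,b]" by blast
  have o: "w!b < w!a"
    using h(4) unfolding e order_iso_def
    by (auto simp: numeral_eq_Suc All_less_Suc)
  show "\<exists>l<length w. \<exists>j<l. w!l < w!j"
    using h o unfolding e by auto
next
  assume "\<exists>l<length w. \<exists>j<l. w!l < w!j"
  then obtain l j where h: "l < length w" "j < l" "w!l < w!j" by blast
  show "contains_vinc w ([2,Suc 0],{})"
    unfolding contains_vinc_def
    apply (simp only: prod.case)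
    apply (rule exI[of _ "[j, l]"])
    using h by (auto simp: order_iso_def numeral_eq_Suc All_less_Suc)
qed

lemma sc_e: "sc_aux P (x#xs) [] = sc_aux P xs [x]" by simp
lemma sc_p: "P (x#s#st) \<Longrightarrow> sc_aux P (x#xs) (s#st) = sc_aux P xs (x#s#st)" by simp
lemma sc_o: "\<not> P (x#s#st) \<Longrightarrow> sc_aux P (x#xs) (s#st) = s # sc_aux P (x#xs) st" by simp
definition Q123 :: "nat list \<Rightarrow> bool" where
  "Q123 w = (\<exists>l<length w. \<exists>j<l. Suc j < l \<and> w!j < w!Suc j \<and> w!Suc j < w!l)"
definition Q21 :: "nat list \<Rightarrow> bool" where
  "Q21 w = (\<exists>l<length w. \<exists>j<l. w!l < w!j)"
lemma Q123_cons: "Q123 (x#xs) = (\<exists>l<length (x#xs). \<exists>j<l. Suc j < l \<and> (x#xs)!j < (x#xs)!Suc j \<and> (x#xs)!Suc j < (x#xs)!l)"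
  by (simp only: Q123_def)
lemma Q21_cons: "Q21 (x#xs) = (\<exists>l<length (x#xs). \<exists>j<l. (x#xs)!l < (x#xs)!j)"
  by (simp only: Q21_def)
lemma c123S: "contains_vinc w ([Suc 0, Suc (Suc 0), Suc (Suc (Suc 0))], {0}) \<longleftrightarrow>
Q123 w"
  using c123[of w] by (simp add: numeral_eq_Suc Q123_def)
lemma c21S: "contains_vinc w ([Suc (Suc 0), Suc 0], {}) \<longleftrightarrow> Q21 w"
  using c21[of w] by (simp add: numeral_eq_Suc Q21_def)

lemma ev1: "west_s (SC pat_12_3 [4,1,3,2]) = [1..<Suc 4]"
  unfolding SC_def west_s_def pat_12_3_def
  by (simp add: c123S c21S numeral_eq_Suc Ex_less_Suc All_less_Suc sc_e sc_p sc_o Q123_cons Q21_cons del: sc_aux.simps(2))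

lemma ev2: "west_s (SC pat_12_3 [1,3,2]) \<noteq> [1..<Suc 3]"
  unfolding SC_def west_s_def pat_12_3_def
  by (simp add: c123S c21S numeral_eq_Suc Ex_less_Suc All_less_Suc sc_e sc_p sc_o Q123_cons Q21_cons del: sc_aux.simps(2))

lemma in_sort: "[4,1,3,2] \<in> Sort pat_12_3"
proof -
  have "[4,1,3,2] \<in> perms 4"
    by (simp add: perms_def numeral_eq_Suc atLeastAtMostSuc_conv insert_commute)
  then have "[4,1,3,2] \<in> Sort_n pat_12_3 4"
    using ev1 unfolding Sort_n_def by blast
  then show ?thesis unfolding Sort_def by force
qed

lemma not_sort: "[1,3,2] \<notin> Sort pat_12_3"
proof
  assume "[1,3,2] \<in> Sort pat_12_3"
  then obtain n where "[1,3,2] \<in> Sort_n pat_12_3 n" unfolding Sort_def by blast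
  moreover then have "n = 3" by (auto simp: Sort_n_def perms_def)
  ultimately show False
    using ev2 unfolding Sort_n_def by blast
qed

lemma cont: "contains [4,1,3,2] [1,3,2]"
  unfolding contains_def contains_vinc_def
  apply (simp only: prod.case)
  apply (rule exI[of _ "[1,2,3]"])
  by (auto simp: order_iso_def numeral_eq_Suc All_less_Suc)

theorem mainTheorem19:
  shows "\<not> perm_class (Sort pat_12_3)"
proof
  assume "perm_class (Sort pat_12_3)"
  moreover have "[1,3,2] \<in> perms 3" by (auto simp: perms_def)
  ultimately have "[1,3,2] \<in> Sort pat_12_3"
    using in_sort cont unfolding perm_class_def by (metis one_le_numeral)
  with not_sort show False by blast
qed

end
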